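(* Let $\mathfrak{A}$ be an architecture with $|\mathsf{Procs}|=1$ and $\mathsf{DS}=\mathsf{Stacks}$, and let $\Sigma$ be a finite alphabet. For all $k>0$, there is a sentence $\Phi^k_{\mathsf{context}}\in\mathsf{CPDL}(\mathfrak{A},\Sigma)$ of size $\mathcal{O}(k|\mathsf{DS}|^2)$ such that for every CBM $\mathcal{M}$ over $\mathfrak{A}$ and $\Sigma$, $\mathcal{M}\models\Phi^k_{\mathsf{context}}$ if and only if $\mathcal{M}\in\mathsf{Context}_k$.
   Context: With one process $p$ and only stacks $d\in\mathsf{DS}$ (each with $\mathsf{Writer}(d)=\mathsf{Reader}(d)=p$), a CBM (multiply nested word) over $\mathfrak{A},\Sigma$ is $\mathcal{M}=(a_1\cdots a_n,(\rhd^d)_{d\in\mathsf{DS}})$ with events $\mathcal{E}=\{1,\dots,n\}$, labels $\lambda(i)=a_i$, process successor $i\to i+1$, and $\rhd^d\subseteq\mathcal{E}^2$ such that distinct edges (over all $d$) have four distinct endpoints, $<=(\to\cup\bigcup_d\rhd^d)^+$ is a strict partial order (so every edge goes forward), and each stack is LIFO: $e_1\rhd^d f_1$, $e_2\rhd^d f_2$, $e_1<e_2<f_1$ imply $f_2<f_1$. A context of $\mathcal{M}$ is a possibly empty interval $I=\{e,e+1,\dots,f\}\subseteq\mathcal{E}$ such that whenever $(i,j)\in\rhd^d$ and $(i',j')\in\rhd^{d'}$ with $I\cap\{i,j\}\ne\emptyset$ and $I\cap\{i',j'\}\ne\emptyset$, then $d=d'$. $\mathcal{M}$ is $k$-context-bounded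 if $\mathcal{E}=I_1\cup\dots\cup I_k$ for some contexts $I_1,\dots,I_k$; $\mathsf{Context}_k$ is the set of $k$-context-bounded CBMs. $\mathsf{CPDL}(\mathfrak{A},\Sigma)$ has atomic propositions $\mathsf{Procs}\cup\Sigma$ and atomic programs $\{\to\}\cup\mathsf{DS}$: sentences $\Phi::=\mathsf{E}\sigma\mid\Phi\vee\Phi\mid\neg\Phi$; state formulas $\sigma::=q\mid\sigma\vee\sigma\mid\neg\sigma\mid\langle\pi\rangle\sigma$; path formulas $\pi::=\gamma\mid\mathsf{test}(\sigma)\mid\pi+\pi\mid\pi\cdot\pi\mid\pi^*\mid\pi^{-1}$. Over a CBM, $q$ holds at $e$ iff $q$ is $\lambda(e)$ or the process of $e$; $\to$ denotes process successor and $d$ denotes $\rhd^d$; $\langle\pi\rangle\sigma$ holds at $e$ iff some $f$ with $(e,f)\in[\![\pi]\!]$ satisfies $\sigma$; $\mathsf{test}(\sigma)$ is the identity on $[\![\sigma]\!]$; $+,\cdot,^*,^{-1}$ are union, composition, reflexive-transitive closure and converse; $\mathsf{E}\sigma$ holds iff some event satisfies $\sigma$. Size is formula length. *)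

theory Defs
  imports Main
begin

text \<open>A CBM is a word of labels (events are positions 0..n-1, process successor i -> i+1)
  together with one edge relation per data structure.  The single process is implicit.\<close>

type_synonym ('a, 'd) cbm = "'a list \<times> ('d \<Rightarrow> (nat \<times> nat) set)"

definition events :: "('a, 'd) cbm \<Rightarrow> nat set" where
  "events M = {0..<length (fst M)}"

definition lab :: "('a, 'd) cbm \<Rightarrow> nat \<Rightarrow> 'a" where
  "lab M i = fst M ! i"

definition edges :: "('a, 'd) cbm \<Rightarrow> 'd \<Rightarrow> (nat \<times> nat) set" where
  "edges M d = snd M d"

definition proc_succ :: "('a, 'd) cbm \<Rightarrow> (nat \<times> nat) set" where
  "proc_succ M = {(i, Suc i) | i. Suc i < length (fst M)}"

definition is_CBM :: "'d set \<Rightarrow> 'a set \<Rightarrow> ('a, 'd) cbm \<Rightarrow> bool" where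
  "is_CBM DS Sig M \<longleftrightarrow>
     set (fst M) \<subseteq> Sig \<and>
     (\<forall>d. d \<notin> DS \<longrightarrow> edges M d = {}) \<and>
     (\<forall>d \<in> DS. edges M d \<subseteq> events M \<times> events M) \<and>
     \<comment> \<open>distinct edges (over all d) have four distinct endpoints\<close>
     (\<forall>d d' e f e' f'. (e, f) \<in> edges M d \<longrightarrow> (e', f') \<in> edges M d' \<longrightarrow>
          (d, e, f) \<noteq> (d', e', f') \<longrightarrow> {e, f} \<inter> {e', f'} = {}) \<and>
     \<comment> \<open>the transitive closure of all edges is a strict partial order\<close>
     irrefl ((proc_succ M \<union> (\<Union>d\<in>DS. edges M d))\<^sup>+) \<and>
     \<comment> \<open>LIFO\<close>
     (\<forall>d \<in> DS. \<forall>e1 f1 e2 f2. (e1, f1) \<in> edges M d \<longrightarrow> (e2, f2) \<in> edges M d \<longrightarrow>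
          e1 < e2 \<longrightarrow> e2 < f1 \<longrightarrow> f2 < f1)"

definition is_interval :: "('a, 'd) cbm \<Rightarrow> nat set \<Rightarrow> bool" where
  "is_interval M I \<longleftrightarrow> I \<subseteq> events M \<and> (\<exists>e f. I = {e..f})"

definition is_context :: "('a, 'd) cbm \<Rightarrow> nat set \<Rightarrow> bool" where
  "is_context M I \<longleftrightarrow> is_interval M I \<and>
     (\<forall>d d' i j i' j'. (i, j) \<in> edges M d \<longrightarrow> (i', j') \<in> edges M d' \<longrightarrow>
        I \<inter> {i, j} \<noteq> {} \<longrightarrow> I \<inter> {i', j'} \<noteq> {} \<longrightarrow> d = d')"

definition context_bounded :: "nat \<Rightarrow> ('a, 'd) cbm \<Rightarrow> bool" where
  "context_bounded k M \<longleftrightarrow>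
     (\<exists>Is. length Is = k \<and> (\<forall>I \<in> set Is. is_context M I) \<and> events M = \<Union>(set Is))"

definition Context :: "'d set \<Rightarrow> 'a set \<Rightarrow> nat \<Rightarrow> ('a, 'd) cbm set" where
  "Context DS Sig k = {M. is_CBM DS Sig M \<and> context_bounded k M}"

datatype 'a atomprop = PProc | PLetter 'a

datatype 'd prog = PNext | PStack 'd

datatype ('a, 'd) sform =
    SAtom "'a atomprop"
  | SOr "('a, 'd) sform" "('a, 'd) sform"
  | SNot "('a, 'd) sform"
  | SDia "('a, 'd) pform" "('a, 'd) sform"
and ('a, 'd) pform =
    PAtom "'d prog"
  | PTest "('a, 'd) sform"
  | PPlus "('a, 'd) pform" "('a, 'd) pform"
  | PComp "('a, 'd) pform" "('a, 'd) pform"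
  | PStar "('a, 'd) pform"
  | PConv "('a, 'd) pform"

datatype ('a, 'd) sentence =
    SE "('a, 'd) sform"
  | SentOr "('a, 'd) sentence" "('a, 'd) sentence"
  | SentNot "('a, 'd) sentence"

fun wf_sform :: "'d set \<Rightarrow> 'a set \<Rightarrow> ('a, 'd) sform \<Rightarrow> bool"
and wf_pform :: "'d set \<Rightarrow> 'a set \<Rightarrow> ('a, 'd) pform \<Rightarrow> bool" where
  "wf_sform DS Sig (SAtom PProc) = True"
| "wf_sform DS Sig (SAtom (PLetter a)) = (a \<in> Sig)"
| "wf_sform DS Sig (SOr s t) = (wf_sform DS Sig s \<and> wf_sform DS Sig t)"
| "wf_sform DS Sig (SNot s) = wf_sform DS Sig s"
| "wf_sform DS Sig (SDia p s) = (wf_pform DS Sig p \<and> wf_sform DS Sig s)"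
| "wf_pform DS Sig (PAtom PNext) = True"
| "wf_pform DS Sig (PAtom (PStack d)) = (d \<in> DS)"
| "wf_pform DS Sig (PTest s) = wf_sform DS Sig s"
| "wf_pform DS Sig (PPlus p q) = (wf_pform DS Sig p \<and> wf_pform DS Sig q)"
| "wf_pform DS Sig (PComp p q) = (wf_pform DS Sig p \<and> wf_pform DS Sig q)"
| "wf_pform DS Sig (PStar p) = wf_pform DS Sig p"
| "wf_pform DS Sig (PConv p) = wf_pform DS Sig p"

fun wf_sentence :: "'d set \<Rightarrow> 'a set \<Rightarrow> ('a, 'd) sentence \<Rightarrow> bool" where
  "wf_sentence DS Sig (SE s) = wf_sform DS Sig s"
| "wf_sentence DS Sig (SentOr a b) = (wf_sentence DS Sig a \<and> wf_sentence DS Sig b)"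
| "wf_sentence DS Sig (SentNot a) = wf_sentence DS Sig a"

fun size_sform :: "('a, 'd) sform \<Rightarrow> nat"
and size_pform :: "('a, 'd) pform \<Rightarrow> nat" where
  "size_sform (SAtom q) = 1"
| "size_sform (SOr s t) = 1 + size_sform s + size_sform t"
| "size_sform (SNot s) = 1 + size_sform s"
| "size_sform (SDia p s) = 1 + size_pform p + size_sform s"
| "size_pform (PAtom g) = 1"
| "size_pform (PTest s) = 1 + size_sform s"
| "size_pform (PPlus p q) = 1 + size_pform p + size_pform q"
| "size_pform (PComp p q) = 1 + size_pform p + size_pform q"
| "size_pform (PStar p) = 1 + size_pform p"
| "size_pform (PConv p) = 1 + size_pform p"

fun size_sentence :: "('a, 'd) sentence \<Rightarrow> nat" where
  "size_sentence (SE s) = 1 + size_sform s"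
| "size_sentence (SentOr a b) = 1 + size_sentence a + size_sentence b"
| "size_sentence (SentNot a) = 1 + size_sentence a"

fun prog_sem :: "('a, 'd) cbm \<Rightarrow> 'd prog \<Rightarrow> (nat \<times> nat) set" where
  "prog_sem M PNext = proc_succ M"
| "prog_sem M (PStack d) = edges M d"

fun sem_s :: "('a, 'd) cbm \<Rightarrow> ('a, 'd) sform \<Rightarrow> nat set"
and sem_p :: "('a, 'd) cbm \<Rightarrow> ('a, 'd) pform \<Rightarrow> (nat \<times> nat) set" where
  "sem_s M (SAtom PProc) = events M"
| "sem_s M (SAtom (PLetter a)) = {e \<in> events M. lab M e = a}"
| "sem_s M (SOr s t) = sem_s M s \<union> sem_s M t"
| "sem_s M (SNot s) = events M - sem_s M s"
| "sem_s M (SDia p s) = {e \<in> events M. \<exists>f. (e, f) \<in> sem_p M p \<and> f \<in> sem_s M s}"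
| "sem_p M (PAtom g) = prog_sem M g"
| "sem_p M (PTest s) = Id_on (sem_s M s)"
| "sem_p M (PPlus p q) = sem_p M p \<union> sem_p M q"
| "sem_p M (PComp p q) = sem_p M p O sem_p M q"
| "sem_p M (PStar p) = Id_on (events M) \<union> (sem_p M p)\<^sup>+"
| "sem_p M (PConv p) = (sem_p M p)\<inverse>"

fun models :: "('a, 'd) cbm \<Rightarrow> ('a, 'd) sentence \<Rightarrow> bool" where
  "models M (SE s) = (\<exists>e. e \<in> sem_s M s)"
| "models M (SentOr a b) = (models M a \<or> models M b)"
| "models M (SentNot a) = (\<not> models M a)"

end

theory Submission
  imports Defs
begin

definition tt :: "('a, 'd) sform" where "tt = SAtom PProc"

definition TT :: "'d \<Rightarrow> ('a, 'd) sform" where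
  "TT d = SOr (SDia (PAtom (PStack d)) tt) (SDia (PConv (PAtom (PStack d))) tt)"

primrec anyT :: "'d list \<Rightarrow> ('a, 'd) sform" where
  "anyT [] = SNot tt"
| "anyT (d # ds) = SOr (TT d) (anyT ds)"

definition sAnd :: "('a, 'd) sform \<Rightarrow> ('a, 'd) sform \<Rightarrow> ('a, 'd) sform" where
  "sAnd a b = SNot (SOr (SNot a) (SNot b))"

definition nxt :: "('a, 'd) pform" where "nxt = PAtom PNext"

definition plusN :: "('a, 'd) pform" where "plusN = PComp nxt (PStar nxt)"

definition stp :: "'d \<Rightarrow> 'd list \<Rightarrow> ('a, 'd) pform" where
  "stp d xs = PComp (PTest (TT d)) (PComp plusN (PTest (sAnd (anyT xs) (SNot (TT d)))))"

primrec sumP :: "'d list \<Rightarrow> 'd list \<Rightarrow> ('a, 'd) pform" where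
  "sumP xs [] = PTest (SNot tt)"
| "sumP xs (d # ds) = PPlus (stp d xs) (sumP xs ds)"

definition pii :: "'d list \<Rightarrow> ('a, 'd) pform" where
  "pii xs = PComp (PStar nxt) (sumP xs xs)"

primrec psi :: "'d list \<Rightarrow> nat \<Rightarrow> ('a, 'd) sform" where
  "psi xs 0 = tt"
| "psi xs (Suc j) = SDia (pii xs) (psi xs j)"

definition touch :: "('a, 'd) cbm \<Rightarrow> 'd \<Rightarrow> nat \<Rightarrow> bool" where
  "touch M d e \<longleftrightarrow> (\<exists>f. (e, f) \<in> edges M d \<or> (f, e) \<in> edges M d)"

lemma sem_atom_sub: "sem_s M (SAtom q) \<subseteq> events M"
  by (cases q) auto

lemma sem_sub_aux: "sem_s M s \<subseteq> events M" and "sem_p M p \<subseteq> UNIV"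
  by (induction s and p rule: sform.induct pform.induct) (auto simp: sem_atom_sub)

lemmas sem_sub = sem_sub_aux(1)

lemma edges_ev: "is_CBM DS Sig M \<Longrightarrow> edges M d \<subseteq> events M \<times> events M"
  unfolding is_CBM_def by (cases "d \<in> DS") auto

lemma sem_tt[simp]: "sem_s M tt = events M"
  by (simp add: tt_def)

lemma sem_TT: "is_CBM DS Sig M \<Longrightarrow> sem_s M (TT d) = {e. touch M d e}"
  using edges_ev[of DS Sig M d] unfolding TT_def touch_def by auto

lemma sem_anyT: "is_CBM DS Sig M \<Longrightarrow> sem_s M (anyT xs) = {e. \<exists>d\<in>set xs. touch M d e}"
  by (induction xs) (auto simp: sem_TT)

lemma sem_sAnd: "sem_s M (sAnd a b) = sem_s M a \<inter> sem_s M b"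
  using sem_sub[of M a] sem_sub[of M b] unfolding sAnd_def by auto

lemma trancl_succ: "(proc_succ M)\<^sup>+ = {(a, b). a < b \<and> b < length (fst M)}"
proof
  show "(proc_succ M)\<^sup>+ \<subseteq> {(a, b). a < b \<and> b < length (fst M)}"
  proof clarify
    fix a b assume "(a, b) \<in> (proc_succ M)\<^sup>+"
    then show "a < b \<and> b < length (fst M)"
      by (induction rule: trancl_induct) (auto simp: proc_succ_def)
  qed
next
  show "{(a, b). a < b \<and> b < length (fst M)} \<subseteq> (proc_succ M)\<^sup>+"
  proof clarify
    fix a b assume "a < b" "b < length (fst M)"
    then show "(a, b) \<in> (proc_succ M)\<^sup>+"
    proof (induction b)
      case 0 then show ?case by simp
    next
      case (Suc b)
      have st: "(b, Suc b) \<in> proc_succ M" using Suc.prems by (auto simp: proc_succ_def)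
      show ?case
      proof (cases "a = b")
        case True then show ?thesis using st by auto
      next
        case False
        then have "(a, b) \<in> (proc_succ M)\<^sup>+" using Suc by auto
        then show ?thesis using st by (rule trancl_into_trancl)
      qed
    qed
  qed
qed

lemma sem_star_nxt: "sem_p M (PStar nxt) = {(a, b). a \<le> b \<and> b < length (fst M)}"
  by (auto simp: nxt_def trancl_succ events_def Id_on_def)

lemma sem_plus_nxt: "sem_p M plusN = {(a, b). a < b \<and> b < length (fst M)}"
  apply (simp add: plusN_def sem_star_nxt del: sem_p.simps(5))
  apply (auto simp: nxt_def proc_succ_def)
  done

lemma sem_sumP: "is_CBM DS Sig M \<Longrightarrow> sem_p M (sumP xs ys) =
  {(x, y). \<exists>d\<in>set ys. touch M d x \<and> x < y \<and> y < length (fst M) \<and> \<not> touch M d y \<and> (\<exists>d'\<in>set xs. touch M d' y)}"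
proof (induction ys)
  case Nil then show ?case by (auto simp: Id_on_def)
next
  case (Cons d ys)
  have "sem_p M (stp d xs) = {(x, y). touch M d x \<and> x < y \<and> y < length (fst M) \<and> \<not> touch M d y \<and> (\<exists>d'\<in>set xs. touch M d' y)}"
    unfolding stp_def using Cons.prems
    by (auto simp: sem_TT sem_anyT sem_sAnd sem_plus_nxt Id_on_def relcomp_unfold events_def simp del: sem_p.simps(5))
  then show ?case using Cons by auto
qed

definition Diff :: "('a, 'd) cbm \<Rightarrow> 'd list \<Rightarrow> nat \<Rightarrow> nat \<Rightarrow> bool" where
  "Diff M xs x y \<longleftrightarrow> (\<exists>d\<in>set xs. touch M d x \<and> \<not> touch M d y \<and> (\<exists>d'\<in>set xs. touch M d' y))"

lemma sem_psi_Suc: "is_CBM DS Sig M \<Longrightarrow> sem_s M (psi xs (Suc j)) =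
  {e \<in> events M. \<exists>x y. e \<le> x \<and> x < y \<and> y < length (fst M) \<and> Diff M xs x y \<and> y \<in> sem_s M (psi xs j)}"
  apply (auto simp: pii_def sem_sumP sem_star_nxt Diff_def relcomp_unfold simp del: sem_p.simps(5))
  subgoal for x xa y d d'
    apply (rule exI[of _ y])
    apply (rule conjI[rotated], assumption)
    apply (rule exI[of _ xa])
    apply auto
    done
  done

lemma sem_psi_0: "sem_s M (psi xs 0) = events M" by simp

lemma uniq_touch:
  assumes "is_CBM DS Sig M" "touch M d p" "touch M d' p" shows "d = d'"
proof (rule ccontr)
  assume ne: "d \<noteq> d'"
  have D: "\<And>e f e' f'. (e, f) \<in> edges M d \<Longrightarrow> (e', f') \<in> edges M d' \<Longrightarrow> {e, f} \<inter> {e', f'} = {}"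
    using assms(1) ne unfolding is_CBM_def by blast
  from assms(2,3) show False unfolding touch_def using D by blast
qed

lemma ctx_touch:
  assumes "is_context M I" "x \<in> I" "y \<in> I" "touch M d x" "touch M d' y" shows "d = d'"
proof -
  have C: "\<And>d d' i j i' j'. (i, j) \<in> edges M d \<Longrightarrow> (i', j') \<in> edges M d' \<Longrightarrow>
        I \<inter> {i, j} \<noteq> {} \<Longrightarrow> I \<inter> {i', j'} \<noteq> {} \<Longrightarrow> d = d'"
    using assms(1) unfolding is_context_def by blast
  from assms(4,5) obtain f g where "(x, f) \<in> edges M d \<or> (f, x) \<in> edges M d"
     "(y, g) \<in> edges M d' \<or> (g, y) \<in> edges M d'" unfolding touch_def by blast
  then show ?thesis using C assms(2,3) by blast
qed

lemma lowb:
  assumes cbm: "is_CBM DS Sig M" and S: "finite S" "\<forall>I\<in>S. is_context M I" "events M \<subseteq> \<Union>S"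
  shows "e \<in> sem_s M (psi xs j) \<Longrightarrow> j + 1 \<le> card {I\<in>S. \<exists>z\<in>I. e \<le> z}"
proof (induction j arbitrary: e)
  case 0
  then have "e \<in> events M" by simp
  then obtain I where "I \<in> S" "e \<in> I" using S by blast
  then have "{I\<in>S. \<exists>z\<in>I. e \<le> z} \<noteq> {}" by blast
  moreover have "finite {I\<in>S. \<exists>z\<in>I. e \<le> z}" using S by simp
  ultimately show ?case by (simp add: Suc_leI card_gt_0_iff)
next
  case (Suc j)
  have "e \<in> {e \<in> events M. \<exists>x y. e \<le> x \<and> x < y \<and> y < length (fst M) \<and> Diff M xs x y \<and> y \<in> sem_s M (psi xs j)}"
    using Suc.prems unfolding sem_psi_Suc[OF cbm, of xs j] .
  then obtain x y where xy: "e \<le> x" "x < y" "y < length (fst M)" "Diff M xs x y" "y \<in> sem_s M (psi xs j)"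
    by blast
  have IH: "j + 1 \<le> card {I\<in>S. \<exists>z\<in>I. y \<le> z}" using Suc.IH xy(5) .
  have "x \<in> events M" using xy unfolding events_def by simp
  then obtain Ix where Ix: "Ix \<in> S" "x \<in> Ix" using S by blast
  have notin: "Ix \<notin> {I\<in>S. \<exists>z\<in>I. y \<le> z}"
  proof
    assume "Ix \<in> {I\<in>S. \<exists>z\<in>I. y \<le> z}"
    then obtain z where z: "z \<in> Ix" "y \<le> z" by blast
    have ctx: "is_context M Ix" using S Ix by blast
    then obtain a b where "Ix = {a..b}" unfolding is_context_def is_interval_def by blast
    then have "y \<in> Ix" using z(1,2) Ix(2) xy(2) by simp
    from xy(4) obtain d d' where "touch M d x" "\<not> touch M d y" "touch M d' y" unfolding Diff_def by blast
    then show False using ctx_touch[OF ctx Ix(2) \<open>y \<in> Ix\<close>] by blast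
  qed
  have sub1: "{I\<in>S. \<exists>z\<in>I. y \<le> z} \<subseteq> {I\<in>S. \<exists>z\<in>I. e \<le> z}"
  proof clarify
    fix I z assume "I \<in> S" "z \<in> I" "y \<le> z"
    then show "\<exists>z\<in>I. e \<le> z" using xy(1,2) by (intro bexI[of _ z]) simp_all
  qed
  have "Ix \<in> {I\<in>S. \<exists>z\<in>I. e \<le> z}" using Ix xy(1) by blast
  then have sub: "{I\<in>S. \<exists>z\<in>I. y \<le> z} \<subset> {I\<in>S. \<exists>z\<in>I. e \<le> z}"
    using notin sub1 by blast
  have "card {I\<in>S. \<exists>z\<in>I. y \<le> z} < card {I\<in>S. \<exists>z\<in>I. e \<le> z}"
    by (rule psubset_card_mono) (use S(1) sub in simp_all)
  then show ?case using IH by simp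
qed

lemma empty_ctx: "is_context M {}"
proof -
  have "{} = {1..0::nat}" by simp
  then show ?thesis unfolding is_context_def is_interval_def by blast
qed

lemma ctx_block:
  assumes cbm: "is_CBM DS Sig M" and xs: "set xs = DS" and b: "b < length (fst M)"
    and nd: "\<And>x y. a \<le> x \<Longrightarrow> x < y \<Longrightarrow> y \<le> b \<Longrightarrow> \<not> Diff M xs x y"
  shows "is_context M {a..b}"
  unfolding is_context_def
proof (intro conjI allI impI)
  show "is_interval M {a..b}" using b unfolding is_interval_def events_def by auto
next
  fix d d' i j i' j'
  assume e1: "(i, j) \<in> edges M d" and e2: "(i', j') \<in> edges M d'"
    and n1: "{a..b} \<inter> {i, j} \<noteq> {}" and n2: "{a..b} \<inter> {i', j'} \<noteq> {}"
  have inDS: "\<And>d i j. (i, j) \<in> edges M d \<Longrightarrow> d \<in> DS" using cbm unfolding is_CBM_def by blast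
  from n1 obtain p where p: "p \<in> {a..b}" "touch M d p" using e1 unfolding touch_def by blast
  from n2 obtain q where q: "q \<in> {a..b}" "touch M d' q" using e2 unfolding touch_def by blast
  have dd: "d \<in> set xs" "d' \<in> set xs" using inDS e1 e2 xs by auto
  show "d = d'"
  proof (rule ccontr)
    assume ne: "d \<noteq> d'"
    have np: "\<not> touch M d' p" using uniq_touch[OF cbm p(2)] ne by blast
    have nq: "\<not> touch M d q" using uniq_touch[OF cbm q(2)] ne by blast
    consider "p < q" | "p = q" | "q < p" by linarith
    then show False
    proof cases
      case 1
      then have "Diff M xs p q" unfolding Diff_def using p q dd nq by blast
      then show False using nd[OF _ 1] p q by auto
    next
      case 2 then show False using np q by simp
    next
      case 3
      then have "Diff M xs q p" unfolding Diff_def using p q dd np by blast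
      then show False using nd[OF _ 3] p q by auto
    qed
  qed
qed

lemma upb:
  assumes cbm: "is_CBM DS Sig M" and xs: "set xs = DS"
  shows "e \<notin> sem_s M (psi xs j) \<Longrightarrow>
    \<exists>Is. length Is = j \<and> (\<forall>I\<in>set Is. is_context M I) \<and> {e..<length (fst M)} \<subseteq> \<Union>(set Is)"
proof (induction j arbitrary: e)
  case 0
  then show ?case by (auto simp: events_def)
next
  case (Suc j)
  show ?case
  proof (cases "e < length (fst M)")
    case False
    then show ?thesis by (intro exI[of _ "replicate (Suc j) {}"]) (auto simp: empty_ctx)
  next
    case True
    show ?thesis
    proof (cases "\<exists>y x. e \<le> x \<and> x < y \<and> y < length (fst M) \<and> Diff M xs x y")
      case False
      have "is_context M {e..length (fst M) - 1}"
        by (rule ctx_block[OF cbm xs]) (use True False in auto)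
      moreover have "{e..<length (fst M)} \<subseteq> {e..length (fst M) - 1}" by auto
      ultimately show ?thesis
        by (intro exI[of _ "{e..length (fst M) - 1} # replicate j {}"]) (auto simp: empty_ctx)
    next
      case ex: True
      define P where "P y = (\<exists>x. e \<le> x \<and> x < y \<and> y < length (fst M) \<and> Diff M xs x y)" for y
      define y0 where "y0 = (LEAST y. P y)"
      have Py0: "P y0" unfolding y0_def using ex P_def by (metis LeastI)
      then obtain x0 where x0: "e \<le> x0" "x0 < y0" "y0 < length (fst M)" "Diff M xs x0 y0"
        unfolding P_def by blast
      have "y0 \<notin> sem_s M (psi xs j)"
      proof
        assume "y0 \<in> sem_s M (psi xs j)"
        then have "e \<in> sem_s M (psi xs (Suc j))" using sem_psi_Suc[OF cbm] x0 True
          by (auto simp: events_def)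
        then show False using Suc.prems by blast
      qed
      then obtain Is where Is: "length Is = j" "\<forall>I\<in>set Is. is_context M I"
        "{y0..<length (fst M)} \<subseteq> \<Union>(set Is)" using Suc.IH by blast
      have "is_context M {e..y0 - 1}"
      proof (rule ctx_block[OF cbm xs])
        show "y0 - 1 < length (fst M)" using x0 by simp
      next
        fix x y assume "e \<le> x" "x < y" "y \<le> y0 - 1"
        then have "\<not> P y" using not_less_Least[of y P] y0_def x0 by fastforce
        then show "\<not> Diff M xs x y" unfolding P_def using \<open>e \<le> x\<close> \<open>x < y\<close> \<open>y \<le> y0 - 1\<close> x0 by auto
      qed
      moreover have "{e..<length (fst M)} \<subseteq> {e..y0 - 1} \<union> {y0..<length (fst M)}" by auto
      ultimately show ?thesis using Is
        by (intro exI[of _ "{e..y0 - 1} # Is"]) auto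
    qed
  qed
qed

lemma wf_TT: "d \<in> DS \<Longrightarrow> wf_sform DS Sig (TT d)"
  by (simp add: TT_def tt_def)

lemma wf_anyT: "set xs \<subseteq> DS \<Longrightarrow> wf_sform DS Sig (anyT xs)"
  by (induction xs) (auto simp: tt_def wf_TT)

lemma wf_sumP: "set xs \<subseteq> DS \<Longrightarrow> set ys \<subseteq> DS \<Longrightarrow> wf_pform DS Sig (sumP xs ys)"
  by (induction ys) (auto simp: tt_def stp_def sAnd_def plusN_def nxt_def wf_TT wf_anyT)

lemma wf_psi: "set xs \<subseteq> DS \<Longrightarrow> wf_sform DS Sig (psi xs j)"
  by (induction j) (auto simp: tt_def pii_def nxt_def wf_sumP)

lemma size_TT: "size_sform (TT d) = 8" by (simp add: TT_def tt_def)

lemma size_anyT: "size_sform (anyT xs) = 2 + 9 * length xs"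
  by (induction xs) (auto simp: tt_def size_TT)

lemma size_stp: "size_pform (stp d xs) = 31 + 9 * length xs"
  by (simp add: stp_def size_TT sAnd_def size_anyT plusN_def nxt_def)

lemma size_sumP: "size_pform (sumP xs ys) = 3 + length ys * (32 + 9 * length xs)"
  by (induction ys) (auto simp: tt_def size_stp)

lemma size_psi: "size_sform (psi xs j) = 1 + j * (7 + length xs * (32 + 9 * length xs))"
  by (induction j) (auto simp: tt_def pii_def nxt_def size_sumP)

lemma arith_bound:
  fixes k L :: nat assumes "k > 0"
  shows "2 + (1 + k * (7 + L * (32 + 9 * L))) \<le> 100 * k * max 1 (L\<^sup>2)"
proof -
  define m where "m = max 1 (L\<^sup>2)"
  have m1: "1 \<le> m" unfolding m_def by simp
  have "L \<le> L * L" by (cases L) auto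
  then have Lm: "L \<le> m" unfolding m_def by (simp add: power2_eq_square max_def)
  have L2m: "L * L \<le> m" unfolding m_def by (simp add: power2_eq_square)
  have "7 + L * (32 + 9 * L) = 7 + 32 * L + 9 * (L * L)" by (simp add: algebra_simps)
  also have "\<dots> \<le> 7 * m + 32 * m + 9 * m" using m1 Lm L2m by linarith
  finally have A: "7 + L * (32 + 9 * L) \<le> 48 * m" by simp
  have "k * (7 + L * (32 + 9 * L)) \<le> k * (48 * m)" using A by simp
  moreover have "3 \<le> 3 * (k * m)" using assms m1 by simp
  ultimately have "2 + (1 + k * (7 + L * (32 + 9 * L))) \<le> 51 * (k * m)" by linarith
  also have "\<dots> \<le> 100 * k * m" by simp
  finally show ?thesis unfolding m_def .
qed

theorem mainTheorem18:
  "\<exists>C :: nat. \<forall>(DS :: 'd set) (Sig :: 'a set). finite DS \<longrightarrow> finite Sig \<longrightarrow>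
     (\<forall>k > 0. \<exists>\<Phi> :: ('a, 'd) sentence.
        wf_sentence DS Sig \<Phi> \<and>
        size_sentence \<Phi> \<le> C * k * max 1 ((card DS)\<^sup>2) \<and>
        (\<forall>M. is_CBM DS Sig M \<longrightarrow> (models M \<Phi> \<longleftrightarrow> M \<in> Context DS Sig k)))"
proof (intro exI[of _ 100] allI impI)
  fix DS :: "'d set" and Sig :: "'a set" and k :: nat
  assume fDS: "finite DS" and fS: "finite Sig" and k: "k > 0"
  obtain xs where xs: "set xs = DS" "distinct xs" using finite_distinct_list[OF fDS] by blast
  have L: "card DS = length xs" using xs distinct_card by metis
  let ?P = "SentNot (SE (psi xs k)) :: ('a, 'd) sentence"
  show "\<exists>\<Phi> :: ('a, 'd) sentence. wf_sentence DS Sig \<Phi> \<and>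
        size_sentence \<Phi> \<le> 100 * k * max 1 ((card DS)\<^sup>2) \<and>
        (\<forall>M. is_CBM DS Sig M \<longrightarrow> (models M \<Phi> \<longleftrightarrow> M \<in> Context DS Sig k))"
  proof (intro exI[of _ ?P] conjI allI impI)
    show "wf_sentence DS Sig ?P" using wf_psi[of xs DS Sig k] xs by simp
    show "size_sentence ?P \<le> 100 * k * max 1 ((card DS)\<^sup>2)"
      using arith_bound[OF k, of "length xs"] by (simp add: size_psi L)
  next
    fix M :: "('a, 'd) cbm" assume cbm: "is_CBM DS Sig M"
    show "models M ?P \<longleftrightarrow> M \<in> Context DS Sig k"
    proof
      assume "models M ?P"
      then have "0 \<notin> sem_s M (psi xs k)" by simp
      from upb[OF cbm xs(1) this] obtain Is where Is: "length Is = k" "\<forall>I\<in>set Is. is_context M I"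
        "{0..<length (fst M)} \<subseteq> \<Union>(set Is)" by blast
      have "\<Union>(set Is) \<subseteq> events M" using Is(2) unfolding is_context_def is_interval_def by blast
      then have "events M = \<Union>(set Is)" using Is(3) unfolding events_def by blast
      then show "M \<in> Context DS Sig k" using cbm Is unfolding Context_def context_bounded_def by blast
    next
      assume "M \<in> Context DS Sig k"
      then obtain Is where Is: "length Is = k" "\<forall>I\<in>set Is. is_context M I" "events M = \<Union>(set Is)"
        unfolding Context_def context_bounded_def by blast
      show "models M ?P"
      proof (rule ccontr)
        assume "\<not> models M ?P"
        then obtain e where e: "e \<in> sem_s M (psi xs k)" by auto
        have "k + 1 \<le> card {I\<in>set Is. \<exists>z\<in>I. e \<le> z}"
          by (rule lowb[OF cbm _ _ _ e]) (use Is in auto)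
        also have "\<dots> \<le> card (set Is)" by (rule card_mono) auto
        also have "\<dots> \<le> k" using Is(1) card_length by metis
        finally show False by simp
      qed
    qed
  qed
qed

end
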